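(* Let $\hat B$ be the bus susceptance matrix of a connected power network (the post-attack network) with bus set $\mathcal N$. Let $P^g, P^d \in \mathbb R^{\mathcal N}$ be vectors of active generation and load, and let $\theta \in \mathbb R^{\mathcal N}$ satisfy $\hat B\theta = P^g - P^d$. Let $s \neq t$ be two generator buses, let $\Gamma > 0$, and define $\delta \in \mathbb R^{\mathcal N}$ by $\delta_s = \Gamma$, $\delta_t = -\Gamma$, $\delta_k = 0$ for all $k \neq s,t$. Put $\hat P^g = P^g + \delta$ and let $\hat\theta$ satisfy $\hat B \hat\theta = \hat P^g - P^d$. Let $k \neq t$ be a bus such that the network contains a path between $s$ and $k$ that does not include $t$. Then $$\hat\theta_k - \hat\theta_t \;>\; \theta_k - \theta_t .$$
   Context: DC power flow model. The network is an undirected connected graph on the bus set $\mathcal N$; each line $km$ has reactance $x_{km} > 0$. The bus susceptance matrix $\hat B$ is defined by $\hat B_{kk} = \sum_{km \ni k} 1/x_{km}$ (sum over lines incident to $k$), $\hat B_{km} = -1/x_{km}$ if $km$ is a line, and $\hat B_{km} = 0$ otherwise. A path between $s$ and $k$ "includes $t$" if $t$ is one of its vertices. *)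

theory Defs
  imports "HOL-Analysis.Analysis"
begin

(* A power network: finite bus set N, set of lines L (each line an unordered pair {k,m}
   of distinct buses of N), reactances x on lines. *)

definition network :: "'a set \<Rightarrow> 'a set set \<Rightarrow> bool" where
  "network N L \<longleftrightarrow> finite N \<and> (\<forall>l\<in>L. \<exists>k m. l = {k, m} \<and> k \<noteq> m \<and> k \<in> N \<and> m \<in> N)"

definition is_path :: "'a set \<Rightarrow> 'a set set \<Rightarrow> 'a list \<Rightarrow> 'a \<Rightarrow> 'a \<Rightarrow> bool" where
  "is_path N L p a b \<longleftrightarrow> p \<noteq> [] \<and> hd p = a \<and> last p = b \<and> set p \<subseteq> N \<and>
     (\<forall>i. Suc i < length p \<longrightarrow> {p ! i, p ! Suc i} \<in> L)"

definition connected_network :: "'a set \<Rightarrow> 'a set set \<Rightarrow> bool" where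
  "connected_network N L \<longleftrightarrow> (\<forall>a\<in>N. \<forall>b\<in>N. \<exists>p. is_path N L p a b)"

definition Bhat :: "'a set \<Rightarrow> 'a set set \<Rightarrow> ('a set \<Rightarrow> real) \<Rightarrow> 'a \<Rightarrow> 'a \<Rightarrow> real" where
  "Bhat N L x k m =
     (if k = m then (\<Sum>l\<in>{l\<in>L. k \<in> l}. 1 / x l)
      else if {k, m} \<in> L then - 1 / x {k, m} else 0)"

definition Bmul :: "'a set \<Rightarrow> 'a set set \<Rightarrow> ('a set \<Rightarrow> real) \<Rightarrow> ('a \<Rightarrow> real) \<Rightarrow> 'a \<Rightarrow> real" where
  "Bmul N L x \<theta> k = (\<Sum>m\<in>N. Bhat N L x k m * \<theta> m)"

end

theory Submission
  imports Defs
begin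

lemma path_prop:
  assumes step: "\<forall>i. Suc i < length p \<longrightarrow> (\<forall>j\<le>i. p!j \<noteq> t) \<longrightarrow> Q (p!i) \<longrightarrow> Q (p!Suc i)"
    and q0: "Q (p!0)"
  shows "i < length p \<Longrightarrow> (\<forall>j<i. p!j \<noteq> t) \<Longrightarrow> Q (p!i)"
proof (induction i)
  case 0 then show ?case using q0 by simp
next
  case (Suc i)
  then have "Q (p!i)" by simp
  moreover have "\<forall>j\<le>i. p!j \<noteq> t" using Suc.prems by auto
  ultimately show ?case using step Suc.prems by blast
qed

definition nb :: "'a set \<Rightarrow> 'a set set \<Rightarrow> 'a \<Rightarrow> 'a set" where
  "nb N L v = {m\<in>N. m \<noteq> v \<and> {v,m} \<in> L}"

lemma lap:
  assumes net: "network N L" and v: "v \<in> N"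
  shows "Bmul N L x \<phi> v = (\<Sum>m\<in>nb N L v. (\<phi> v - \<phi> m) / x {v,m})"
proof -
  have fin: "finite N" using net unfolding network_def by auto
  have finb: "finite (nb N L v)" using fin unfolding nb_def by auto
  have img: "(\<lambda>m. {v,m}) ` nb N L v = {l\<in>L. v \<in> l}"
  proof
    show "(\<lambda>m. {v,m}) ` nb N L v \<subseteq> {l\<in>L. v \<in> l}" unfolding nb_def by auto
  next
    show "{l\<in>L. v \<in> l} \<subseteq> (\<lambda>m. {v,m}) ` nb N L v"
    proof
      fix l assume l: "l \<in> {l\<in>L. v \<in> l}"
      then obtain a b where ab: "l = {a,b}" "a \<noteq> b" "a \<in> N" "b \<in> N"
        using net unfolding network_def by blast
      show "l \<in> (\<lambda>m. {v,m}) ` nb N L v"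
      proof (cases "v = a")
        case True
        then show ?thesis using ab l unfolding nb_def by (auto intro!: image_eqI[where x=b])
      next
        case False
        then have "v = b" using ab l by auto
        then show ?thesis using ab l unfolding nb_def
          by (auto intro!: image_eqI[where x=a] simp: insert_commute)
      qed
    qed
  qed
  have inj: "inj_on (\<lambda>m. {v,m}) (nb N L v)"
    unfolding inj_on_def nb_def by (auto simp: doubleton_eq_iff)
  have diag: "(\<Sum>l\<in>{l\<in>L. v \<in> l}. 1 / x l) = (\<Sum>m\<in>nb N L v. 1 / x {v,m})"
    using sum.reindex[OF inj, of "\<lambda>l. 1 / x l"] img by simp
  have off: "(\<Sum>m\<in>N-{v}. Bhat N L x v m * \<phi> m) = (\<Sum>m\<in>nb N L v. - \<phi> m / x {v,m})"
  proof -
    have "(\<Sum>m\<in>N-{v}. Bhat N L x v m * \<phi> m) = (\<Sum>m\<in>N-{v}. if {v,m} \<in> L then - \<phi> m / x {v,m} else 0)"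
      by (rule sum.cong) (auto simp: Bhat_def)
    also have "\<dots> = (\<Sum>m\<in>{m\<in>N-{v}. {v,m} \<in> L}. - \<phi> m / x {v,m})"
      using sum.inter_filter[of "N-{v}" "\<lambda>m. - \<phi> m / x {v,m}" "\<lambda>m. {v,m} \<in> L"] fin by simp
    also have "{m\<in>N-{v}. {v,m} \<in> L} = nb N L v" unfolding nb_def by auto
    finally show ?thesis .
  qed
  have "Bmul N L x \<phi> v = Bhat N L x v v * \<phi> v + (\<Sum>m\<in>N-{v}. Bhat N L x v m * \<phi> m)"
    unfolding Bmul_def using fin v by (simp add: sum.remove)
  also have "\<dots> = (\<Sum>m\<in>nb N L v. 1 / x {v,m}) * \<phi> v + (\<Sum>m\<in>nb N L v. - \<phi> m / x {v,m})"
    using diag off by (simp add: Bhat_def)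
  also have "\<dots> = (\<Sum>m\<in>nb N L v. (\<phi> v - \<phi> m) / x {v,m})"
    by (simp add: sum_distrib_right sum.distrib[symmetric] diff_divide_distrib)
  finally show ?thesis .
qed

theorem lemma1:
  fixes N :: "'a set" and L :: "'a set set" and x :: "'a set \<Rightarrow> real"
    and Pg Pd \<theta> \<theta>' :: "'a \<Rightarrow> real" and s t k :: 'a and \<Gamma> :: real
  assumes net: "network N L"
    and conn: "connected_network N L"
    and xpos: "\<forall>l\<in>L. x l > 0"
    and flow: "\<forall>j\<in>N. Bmul N L x \<theta> j = Pg j - Pd j"
    and st: "s \<in> N" "t \<in> N" "s \<noteq> t"
    and \<Gamma>: "\<Gamma> > 0"
    and flow': "\<forall>j\<in>N. Bmul N L x \<theta>' j =
        (Pg j + (if j = s then \<Gamma> else if j = t then - \<Gamma> else 0)) - Pd j"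
    and k: "k \<in> N" "k \<noteq> t"
    and path: "\<exists>p. is_path N L p s k \<and> t \<notin> set p"
  shows "\<theta>' k - \<theta>' t > \<theta> k - \<theta> t"
proof -
  define \<phi> where "\<phi> = (\<lambda>v. \<theta>' v - \<theta> v)"
  define d where "d = (\<lambda>j. if j = s then \<Gamma> else if j = t then - \<Gamma> else (0::real))"
  have fin: "finite N" using net unfolding network_def by auto
  have finb: "\<And>v. finite (nb N L v)" using fin unfolding nb_def by auto
  have L: "\<And>v. v \<in> N \<Longrightarrow> (\<Sum>m\<in>nb N L v. (\<phi> v - \<phi> m) / x {v,m}) = d v"
  proof -
    fix v assume v: "v \<in> N"
    have "(\<Sum>m\<in>nb N L v. (\<phi> v - \<phi> m) / x {v,m}) =
       (\<Sum>m\<in>nb N L v. (\<theta>' v - \<theta>' m) / x {v,m}) - (\<Sum>m\<in>nb N L v. (\<theta> v - \<theta> m) / x {v,m})"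
      unfolding \<phi>_def by (simp add: sum_subtractf[symmetric] diff_divide_distrib[symmetric] algebra_simps)
    also have "\<dots> = d v"
      using lap[OF net v, of x \<theta>'] lap[OF net v, of x \<theta>] flow flow' v unfolding d_def by auto
    finally show "(\<Sum>m\<in>nb N L v. (\<phi> v - \<phi> m) / x {v,m}) = d v" .
  qed
  define mn where "mn = Min (\<phi> ` N)"
  have Nne: "N \<noteq> {}" using st by auto
  have mnle: "\<And>v. v \<in> N \<Longrightarrow> mn \<le> \<phi> v" unfolding mn_def using fin by auto
  have nbN: "\<And>v. nb N L v \<subseteq> N" unfolding nb_def by auto
  have xnb: "\<And>v m. m \<in> nb N L v \<Longrightarrow> x {v,m} > 0" using xpos unfolding nb_def by auto
  have nonpos: "\<And>v m. v \<in> N \<Longrightarrow> \<phi> v = mn \<Longrightarrow> m \<in> nb N L v \<Longrightarrow> (\<phi> v - \<phi> m) / x {v,m} \<le> 0"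
    using mnle nbN xnb by (metis diff_ge_0_iff_ge divide_nonpos_pos le_iff_diff_le_0 subsetD)
  have sumle: "\<And>v. v \<in> N \<Longrightarrow> \<phi> v = mn \<Longrightarrow> (\<Sum>m\<in>nb N L v. (\<phi> v - \<phi> m) / x {v,m}) \<le> 0"
    by (intro sum_nonpos ballI nonpos) auto
  have sS: "\<phi> s \<noteq> mn"
    using sumle[OF st(1)] L[OF st(1)] \<Gamma> unfolding d_def by auto
  have closed: "\<And>v u. v \<in> N \<Longrightarrow> v \<noteq> t \<Longrightarrow> \<phi> v = mn \<Longrightarrow> {v,u} \<in> L \<Longrightarrow> u \<in> N \<Longrightarrow> \<phi> u = mn"
  proof -
    fix v u assume v: "v \<in> N" "v \<noteq> t" "\<phi> v = mn" and u: "{v,u} \<in> L" "u \<in> N"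
    have "v \<noteq> s" using sS v by auto
    then have d0: "d v = 0" using v unfolding d_def by auto
    show "\<phi> u = mn"
    proof (cases "u = v")
      case True then show ?thesis using v by simp
    next
      case False
      then have un: "u \<in> nb N L v" using u unfolding nb_def by auto
      have s0: "(\<Sum>m\<in>nb N L v. - ((\<phi> v - \<phi> m) / x {v,m})) = 0"
        using L[OF v(1)] d0 by (simp add: sum_negf)
      have "\<forall>m\<in>nb N L v. - ((\<phi> v - \<phi> m) / x {v,m}) = 0"
        using sum_nonneg_eq_0_iff[OF finb, where f="\<lambda>m. - ((\<phi> v - \<phi> m) / x {v,m})"] nonpos[OF v(1) v(3)]
          s0 by auto
      then have "(\<phi> v - \<phi> u) / x {v,u} = 0" using un by auto
      then show ?thesis using xnb[OF un] v by simp
    qed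
  qed
  have tmin: "\<phi> t = mn"
  proof (rule ccontr)
    assume tn: "\<phi> t \<noteq> mn"
    obtain v where v: "v \<in> N" "\<phi> v = mn" unfolding mn_def using fin Nne
      by (metis (no_types, lifting) Min_in finite_imageI image_iff image_is_empty)
    obtain p where p: "is_path N L p v t" using conn v st unfolding connected_network_def by blast
    have pn: "p \<noteq> []" "hd p = v" "last p = t" "set p \<subseteq> N"
      and pe: "\<forall>i. Suc i < length p \<longrightarrow> {p ! i, p ! Suc i} \<in> L"
      using p unfolding is_path_def by auto
    let ?Q = "\<lambda>w. \<phi> w = mn"
    have ex: "\<exists>j. j < length p \<and> p!j = t" using pn by (intro exI[of _ "length p - 1"]) (auto simp: last_conv_nth)
    define j0 where "j0 = (LEAST j. j < length p \<and> p!j = t)"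
    have j0: "j0 < length p" "p!j0 = t" using LeastI_ex[OF ex] unfolding j0_def by auto
    have bef: "\<forall>i<j0. p!i \<noteq> t"
    proof (intro allI impI)
      fix i assume "i < j0"
      then show "p!i \<noteq> t" using not_less_Least[of i "\<lambda>j. j < length p \<and> p!j = t"] j0
        unfolding j0_def by auto
    qed
    have "?Q (p!j0)"
    proof (rule path_prop[of p t ?Q])
      show "\<forall>i. Suc i < length p \<longrightarrow> (\<forall>j\<le>i. p!j \<noteq> t) \<longrightarrow> ?Q (p!i) \<longrightarrow> ?Q (p!Suc i)"
      proof (intro allI impI)
        fix i assume i: "Suc i < length p" "\<forall>j\<le>i. p!j \<noteq> t" "?Q (p!i)"
        show "?Q (p!Suc i)"
          using closed[of "p!i" "p!Suc i"] i pe pn(4) by (meson Suc_lessD le_refl nth_mem subsetD)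
      qed
      show "?Q (p!0)" using pn v by (simp add: hd_conv_nth)
    qed (use j0 bef in auto)
    then show False using j0 tn by simp
  qed
  obtain q where q: "is_path N L q s k" "t \<notin> set q" using path by blast
  have qn: "q \<noteq> []" "hd q = s" "last q = k" "set q \<subseteq> N"
    and qe: "\<forall>i. Suc i < length q \<longrightarrow> {q ! i, q ! Suc i} \<in> L"
    using q unfolding is_path_def by auto
  let ?R = "\<lambda>w. \<phi> w \<noteq> mn"
  have "?R (q ! (length q - 1))"
  proof (rule path_prop[of q t ?R])
    show "\<forall>i. Suc i < length q \<longrightarrow> (\<forall>j\<le>i. q!j \<noteq> t) \<longrightarrow> ?R (q!i) \<longrightarrow> ?R (q!Suc i)"
    proof (intro allI impI)
      fix i assume i: "Suc i < length q" "\<forall>j\<le>i. q!j \<noteq> t" "?R (q!i)"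
      show "?R (q!Suc i)"
      proof
        assume e: "\<phi> (q!Suc i) = mn"
        have "q!Suc i \<in> N" "q!i \<in> N" "q!Suc i \<noteq> t" using i qn(4) q(2)
          by (metis Suc_lessD nth_mem subsetD)+
        moreover have "{q!Suc i, q!i} \<in> L" using qe i by (simp add: insert_commute)
        ultimately have "\<phi> (q!i) = mn" using closed e by blast
        then show False using i by simp
      qed
    qed
    show "?R (q!0)" using qn sS by (simp add: hd_conv_nth)
    show "length q - 1 < length q" using qn by simp
    show "\<forall>j<length q - 1. q!j \<noteq> t" using q(2) by auto
  qed
  then have "\<phi> k \<noteq> mn" using qn by (simp add: last_conv_nth)
  then have "\<phi> k > \<phi> t" using mnle[OF k(1)] tmin by simp
  then show ?thesis unfolding \<phi>_def by simp
qed

end
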